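(* Let $n \geq 2$ be an integer. There exists a greatest integer $w$ such that there is an S-template with width $w$ and $n$ colors; denote it $S^+(n)$. Moreover, $$2S(n-1)+1 \leq S^+(n) \leq S(n).$$
   Context: A set $A \subseteq \mathbb{N}$ is sum-free if for all $(a,b)\in A^2$ (allowing $a=b$), $a+b \notin A$. For $n\ge 1$, the Schur number $S(n)$ is the largest integer $p$ such that $\{1,\dots,p\}$ can be partitioned into $n$ sum-free subsets. For positive integers $p,n$, an S-template with $n$ colors and width $p$ is a partition of $\{1,\dots,p\}$ into $n$ sum-free subsets $A_1,\dots,A_n$ such that for every $i \in \{1,\dots,n-1\}$ (i.e. every subset except $A_n$) and all $(x,y)\in A_i^2$: if $x+y>p$ then $x+y-p \notin A_i$. *)

theory Defs
  imports Main
begin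

definition sum_free :: "nat set \<Rightarrow> bool" where
  "sum_free A \<longleftrightarrow> (\<forall>a\<in>A. \<forall>b\<in>A. a + b \<notin> A)"

definition sum_free_partition :: "nat \<Rightarrow> nat \<Rightarrow> (nat \<Rightarrow> nat set) \<Rightarrow> bool" where
  "sum_free_partition n p A \<longleftrightarrow>
     (\<Union>i\<in>{1..n}. A i) = {1..p} \<and>
     (\<forall>i\<in>{1..n}. \<forall>j\<in>{1..n}. i \<noteq> j \<longrightarrow> A i \<inter> A j = {}) \<and>
     (\<forall>i\<in>{1..n}. sum_free (A i))"

definition schur_partitionable :: "nat \<Rightarrow> nat \<Rightarrow> bool" where
  "schur_partitionable n p \<longleftrightarrow> (\<exists>A. sum_free_partition n p A)"

definition schur :: "nat \<Rightarrow> nat" where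
  "schur n = (GREATEST p. schur_partitionable n p)"

definition S_template :: "nat \<Rightarrow> nat \<Rightarrow> (nat \<Rightarrow> nat set) \<Rightarrow> bool" where
  "S_template n p A \<longleftrightarrow> 0 < p \<and> 0 < n \<and> sum_free_partition n p A \<and>
     (\<forall>i\<in>{1..n-1}. \<forall>x\<in>A i. \<forall>y\<in>A i. x + y > p \<longrightarrow> x + y - p \<notin> A i)"

definition has_S_template :: "nat \<Rightarrow> nat \<Rightarrow> bool" where
  "has_S_template n w \<longleftrightarrow> (\<exists>A. S_template n w A)"

definition schur_plus :: "nat \<Rightarrow> nat" where
  "schur_plus n = (GREATEST w. has_S_template n w)"

end

theory Submission
  imports Defs
begin

fun RR :: "nat \<Rightarrow> nat" where
  "RR 0 = 2"
| "RR (Suc n) = Suc n * RR n + 1"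

lemma RR_pos: "RR n \<ge> 1"
  by (cases n) auto

lemma ramsey_tri:
  fixes X :: "nat set" and c :: "nat \<Rightarrow> nat"
  assumes "finite X" "finite C" "card C \<le> n" "card X \<ge> RR n"
    "\<forall>x\<in>X. \<forall>y\<in>X. x < y \<longrightarrow> c (y - x) \<in> C"
  shows "\<exists>x\<in>X. \<exists>y\<in>X. \<exists>z\<in>X. x < y \<and> y < z \<and> c (y - x) = c (z - y) \<and> c (z - y) = c (z - x)"
  using assms
proof (induction n arbitrary: X C)
  case 0
  then have "C = {}" by auto
  from 0 have "card X \<ge> 2" by simp
  then obtain x y where "x \<in> X" "y \<in> X" "x \<noteq> y"
    by (metis One_nat_def card_le_Suc0_iff_eq not_less_eq_eq numeral_2_eq_2 0(1))
  then show ?case using 0 \<open>C = {}\<close>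
    by (metis empty_iff linorder_neqE_nat)
next
  case (Suc n)
  have cX: "card X \<ge> Suc n * RR n + 1" using Suc.prems by simp
  then have "X \<noteq> {}" by auto
  define x0 where "x0 = Min X"
  have x0X: "x0 \<in> X" using \<open>X \<noteq> {}\<close> Suc.prems(1) by (simp add: x0_def)
  have x0min: "\<And>y. y \<in> X \<Longrightarrow> x0 \<le> y" using Suc.prems(1) by (simp add: x0_def)
  define Y where "Y = X - {x0}"
  have finY: "finite Y" using Suc.prems(1) by (simp add: Y_def)
  have cY: "card Y \<ge> Suc n * RR n" using cX x0X Suc.prems(1) by (simp add: Y_def)
  define YC where "YC col = {y \<in> Y. c (y - x0) = col}" for col
  have Yun: "Y = (\<Union>col\<in>C. YC col)"
  proof
    show "Y \<subseteq> (\<Union>col\<in>C. YC col)"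
    proof
      fix y assume "y \<in> Y"
      then have "x0 < y" "y \<in> X" using x0min by (auto simp: Y_def, force)
      then have "c (y - x0) \<in> C" using Suc.prems(5) x0X by blast
      then show "y \<in> (\<Union>col\<in>C. YC col)" using \<open>y \<in> Y\<close> by (auto simp: YC_def)
    qed
  qed (auto simp: YC_def)
  have "\<exists>col\<in>C. card (YC col) \<ge> RR n"
  proof (rule ccontr)
    assume "\<not> ?thesis"
    then have lt: "\<forall>col\<in>C. card (YC col) \<le> RR n - 1" by force
    have "card Y \<le> (\<Sum>col\<in>C. card (YC col))"
      using Yun card_UN_le[OF Suc.prems(2)] by metis
    also have "\<dots> \<le> card C * (RR n - 1)"
      using sum_bounded_above[of C "\<lambda>col. card (YC col)" "RR n - 1"] lt by simp
    also have "\<dots> \<le> Suc n * (RR n - 1)" using Suc.prems(3) by (rule mult_le_mono1)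
    also have "\<dots> < Suc n * RR n" using RR_pos[of n] by (intro mult_strict_left_mono) auto
    finally show False using cY by simp
  qed
  then obtain col where col: "col \<in> C" "card (YC col) \<ge> RR n" by blast
  have YCsub: "YC col \<subseteq> X" by (auto simp: YC_def Y_def)
  show ?case
  proof (cases "\<exists>y\<in>YC col. \<exists>y'\<in>YC col. y < y' \<and> c (y' - y) = col")
    case True
    then obtain y y' where yy: "y \<in> YC col" "y' \<in> YC col" "y < y'" "c (y' - y) = col" by blast
    have "x0 < y" using yy(1) x0min by (force simp: YC_def Y_def)
    moreover have "c (y - x0) = col" "c (y' - x0) = col" using yy by (auto simp: YC_def)
    ultimately show ?thesis using yy x0X YCsub by (metis subsetD)
  next
    case False
    have "\<exists>x\<in>YC col. \<exists>y\<in>YC col. \<exists>z\<in>YC col. x < y \<and> y < z \<and> c (y - x) = c (z - y) \<and> c (z - y) = c (z - x)"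
    proof (rule Suc.IH)
      show "finite (YC col)" using finY by (simp add: YC_def)
      show "finite (C - {col})" using Suc.prems(2) by simp
      show "card (C - {col}) \<le> n" using Suc.prems(3) col(1) Suc.prems(2) by simp
      show "card (YC col) \<ge> RR n" by (rule col(2))
      show "\<forall>x\<in>YC col. \<forall>y\<in>YC col. x < y \<longrightarrow> c (y - x) \<in> C - {col}"
        using False Suc.prems(5) YCsub by blast
    qed
    then show ?thesis using YCsub by blast
  qed
qed

lemma partition_bound:
  assumes "sum_free_partition n p A"
  shows "p < RR n"
proof (rule ccontr)
  assume "\<not> p < RR n"
  then have ge: "card {0..p} \<ge> RR n" by simp
  define c where "c d = (SOME i. i \<in> {1..n} \<and> d \<in> A i)" for d
  have cprop: "c d \<in> {1..n} \<and> d \<in> A (c d)" if "d \<in> {1..p}" for d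
  proof -
    have "\<exists>i. i \<in> {1..n} \<and> d \<in> A i" using assms that
      unfolding sum_free_partition_def by blast
    then show ?thesis unfolding c_def by (rule someI_ex)
  qed
  have "\<exists>x\<in>{0..p}. \<exists>y\<in>{0..p}. \<exists>z\<in>{0..p}. x < y \<and> y < z \<and> c (y - x) = c (z - y) \<and> c (z - y) = c (z - x)"
  proof (rule ramsey_tri[where C = "{1..n}" and n = n])
    show "\<forall>x\<in>{0..p}. \<forall>y\<in>{0..p}. x < y \<longrightarrow> c (y - x) \<in> {1..n}"
    proof (intro ballI impI)
      fix x y assume "x \<in> {0..p}" "y \<in> {0..p}" "x < y"
      then have "y - x \<in> {1..p}" by auto
      then show "c (y - x) \<in> {1..n}" using cprop[of "y - x"] by blast
    qed
  qed (use ge in auto)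
  then obtain x y z where xyz: "x \<le> p" "y \<le> p" "z \<le> p" "x < y" "y < z"
    "c (y - x) = c (z - y)" "c (z - y) = c (z - x)" by auto
  have m1: "y - x \<in> {1..p}" "z - y \<in> {1..p}" "z - x \<in> {1..p}" using xyz by auto
  have a: "y - x \<in> A (c (y - x))" "c (y - x) \<in> {1..n}" using cprop[OF m1(1)] by auto
  have b: "z - y \<in> A (c (y - x))" using cprop[OF m1(2)] xyz by auto
  have s: "z - x \<in> A (c (y - x))" using cprop[OF m1(3)] xyz by auto
  have "sum_free (A (c (y - x)))" using assms a(2) unfolding sum_free_partition_def by blast
  moreover have "(y - x) + (z - y) = z - x" using xyz by simp
  ultimately show False using a b s unfolding sum_free_def by metis
qed

lemma schur_props:
  "schur_partitionable n (schur n) \<and> (\<forall>p. schur_partitionable n p \<longrightarrow> p \<le> schur n)"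
proof -
  have z: "schur_partitionable n 0"
    unfolding schur_partitionable_def sum_free_partition_def sum_free_def
    by (rule exI[of _ "\<lambda>_. {}"]) auto
  have bd: "\<And>p. schur_partitionable n p \<Longrightarrow> p \<le> RR n"
    using partition_bound unfolding schur_partitionable_def by (meson less_imp_le)
  show ?thesis unfolding schur_def using GreatestI_nat[where P="schur_partitionable n" and b="RR n", OF z bd]
     Greatest_le_nat[where P="schur_partitionable n" and b="RR n", OF _ bd] by blast
qed

theorem proposition2p2:
  fixes n :: nat
  assumes "n \<ge> 2"
  shows "(\<exists>w. has_S_template n w \<and> (\<forall>w'. has_S_template n w' \<longrightarrow> w' \<le> w))
         \<and> 2 * schur (n - 1) + 1 \<le> schur_plus n \<and> schur_plus n \<le> schur n"
proof -
  have tb: "w \<le> schur n" if "has_S_template n w" for w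
    using that schur_props[of n] unfolding has_S_template_def S_template_def schur_partitionable_def
    by blast
  define m where "m = schur (n - 1)"
  obtain B where B: "sum_free_partition (n - 1) m B"
    using schur_props[of "n - 1"] unfolding m_def schur_partitionable_def by blast
  define A where "A i = (if i = n then {m+1..2*m+1} else B i)" for i
  have Bsub: "\<And>i. i \<in> {1..n-1} \<Longrightarrow> B i \<subseteq> {1..m}"
    using B unfolding sum_free_partition_def by blast
  have "S_template n (2*m+1) A"
    unfolding S_template_def
  proof (intro conjI)
    show "0 < 2*m+1" by simp
    show "0 < n" using assms by simp
    show "\<forall>i\<in>{1..n-1}. \<forall>x\<in>A i. \<forall>y\<in>A i. x + y > 2*m+1 \<longrightarrow> x + y - (2*m+1) \<notin> A i"
    proof (intro ballI impI)
      fix i x y assume i: "i \<in> {1..n-1}" and x: "x \<in> A i" and y: "y \<in> A i" and g: "x + y > 2*m+1"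
      have "i \<noteq> n" using i by auto
      then have "x \<le> m" "y \<le> m" using x y Bsub[OF i] by (auto simp: A_def)
      then show "x + y - (2*m+1) \<notin> A i" using g by simp
    qed
    show "sum_free_partition n (2*m+1) A"
      unfolding sum_free_partition_def
    proof (intro conjI)
      have n1: "{1..n} = insert n {1..n-1}" using assms by auto
      have "(\<Union>i\<in>{1..n-1}. A i) = (\<Union>i\<in>{1..n-1}. B i)"
        by (rule SUP_cong) (auto simp: A_def)
      then have "(\<Union>i\<in>{1..n-1}. A i) = {1..m}"
        using B unfolding sum_free_partition_def by simp
      moreover have "(\<Union>i\<in>{1..n}. A i) = A n \<union> (\<Union>i\<in>{1..n-1}. A i)" using n1 by simp
      moreover have "A n = {m+1..2*m+1}" by (simp add: A_def)
      ultimately show "(\<Union>i\<in>{1..n}. A i) = {1..2*m+1}" by auto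
      show "\<forall>i\<in>{1..n}. \<forall>j\<in>{1..n}. i \<noteq> j \<longrightarrow> A i \<inter> A j = {}"
      proof (intro ballI impI)
        fix i j assume i: "i \<in> {1..n}" and j: "j \<in> {1..n}" and ij: "i \<noteq> j"
        show "A i \<inter> A j = {}"
        proof (cases "i = n")
          case True
          then have "j \<in> {1..n-1}" using j ij by auto
          then show ?thesis using True ij Bsub[OF \<open>j \<in> {1..n-1}\<close>] by (auto simp: A_def)
        next
          case False
          then have i': "i \<in> {1..n-1}" using i by auto
          show ?thesis
          proof (cases "j = n")
            case True then show ?thesis using i' False Bsub[OF i'] by (auto simp: A_def)
          next
            case False
            then have "j \<in> {1..n-1}" using j by auto
            then show ?thesis using i' ij B \<open>i \<noteq> n\<close> False
              unfolding sum_free_partition_def A_def by auto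
          qed
        qed
      qed
      show "\<forall>i\<in>{1..n}. sum_free (A i)"
      proof
        fix i assume i: "i \<in> {1..n}"
        show "sum_free (A i)"
        proof (cases "i = n")
          case True then show ?thesis by (auto simp: A_def sum_free_def)
        next
          case False
          then have "i \<in> {1..n-1}" using i by auto
          then show ?thesis using B False unfolding sum_free_partition_def A_def by auto
        qed
      qed
    qed
  qed
  then have ht: "has_S_template n (2*m+1)" unfolding has_S_template_def by blast
  have sp: "has_S_template n (schur_plus n)" and le: "2*m+1 \<le> schur_plus n"
    unfolding schur_plus_def using GreatestI_nat[where P="has_S_template n" and b="schur n", OF ht tb]
      Greatest_le_nat[where P="has_S_template n" and b="schur n", OF ht tb] by auto
  have "\<forall>w'. has_S_template n w' \<longrightarrow> w' \<le> schur_plus n"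
    unfolding schur_plus_def using Greatest_le_nat[where P="has_S_template n" and b="schur n", OF _ tb] by blast
  then show ?thesis using sp le tb[OF sp] m_def by blast
qed

end
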